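(* Let $r\ge2$, $\mathcal{X}=\{1,\dots,r\}$, $0<\eta<1$, $0<\epsilon<1$, and put $s=\Big\lfloor \dfrac{\log(1-\epsilon)}{2\log\eta}\Big\rfloor$. Consider the $k$-fold memoryless erasure channel $P_\eta(Y^k|X^k)$. Then: (i) for every $k\ge s$ there is a partition of $\mathcal{X}^k$ into exactly $r^{k-s}$ sets such that any two sequences in the same set differ in at most $s$ coordinates; (ii) consequently, for every $k\ge s$, the number of blocks of an $\epsilon$-reverse compression of $P_\eta(Y^k|X^k)$ satisfies $|\mathcal{P}^{(k)}_\epsilon|\le r^{k-s}$; (iii) the compressibilities $\Gamma^{(k)}_\epsilon$ of $P_\eta(Y^k|X^k)$ satisfy $\liminf_{k\to\infty}\Gamma^{(k)}_\epsilon\ \ge\ 1-r^{-s}$.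
   Context: Erasure channel: $\mathcal{Y}=\{1,\dots,r,\alpha\}$, $P_\eta(y|x)=(1-\eta)\delta_{x,y}+\eta\delta_{\alpha,y}$; its $k$-fold memoryless version is $P_\eta(y^k|x^k)=\prod_{i=1}^kP_\eta(y_i|x_i)$ on input alphabet $\mathcal{X}^k$. Fidelity of distributions: $F[P,Q]=[\sum_x\sqrt{P(x)Q(x)}]^2$. For a channel $P(Y|X)$ with finite input alphabet $\mathcal{X}$ and $\epsilon\in[0,1]$, an $\epsilon$-reverse compression is a partition $\mathcal{P}_\epsilon$ of $\mathcal{X}$ with the minimum possible number of blocks among all partitions such that any two inputs $x,x'$ in the same block satisfy $F[P(Y|x),P(Y|x')]\ge1-\epsilon$. The compressibility is $\Gamma_\epsilon=\frac{|\mathcal{X}|-|\mathcal{P}_\epsilon|}{|\mathcal{X}|-1}$ (for $|\mathcal{X}|\ge2$); $\Gamma^{(k)}_\epsilon$ denotes this quantity for the channel $P_\eta(Y^k|X^k)$ with input alphabet $\mathcal{X}^k$. *)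

theory Defs
  imports Complex_Main "HOL-Library.Disjoint_Sets" "HOL-Library.Extended_Real"
begin

definition fidelity :: "'y set \<Rightarrow> ('y \<Rightarrow> real) \<Rightarrow> ('y \<Rightarrow> real) \<Rightarrow> real" where
  "fidelity Y P Q = (\<Sum>y\<in>Y. sqrt (P y * Q y))^2"

definition eps_admissible ::
  "('x \<Rightarrow> 'y \<Rightarrow> real) \<Rightarrow> 'x set \<Rightarrow> 'y set \<Rightarrow> real \<Rightarrow> 'x set set \<Rightarrow> bool" where
  "eps_admissible W X Y eps \<P> \<longleftrightarrow> partition_on X \<P> \<and>
     (\<forall>B\<in>\<P>. \<forall>x\<in>B. \<forall>x'\<in>B. fidelity Y (W x) (W x') \<ge> 1 - eps)"

definition reverse_compression ::
  "('x \<Rightarrow> 'y \<Rightarrow> real) \<Rightarrow> 'x set \<Rightarrow> 'y set \<Rightarrow> real \<Rightarrow> 'x set set \<Rightarrow> bool" where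
  "reverse_compression W X Y eps \<P> \<longleftrightarrow> eps_admissible W X Y eps \<P> \<and>
     (\<forall>\<Q>. eps_admissible W X Y eps \<Q> \<longrightarrow> card \<P> \<le> card \<Q>)"

definition rc_blocks :: "('x \<Rightarrow> 'y \<Rightarrow> real) \<Rightarrow> 'x set \<Rightarrow> 'y set \<Rightarrow> real \<Rightarrow> nat" where
  "rc_blocks W X Y eps = (LEAST n. \<exists>\<P>. eps_admissible W X Y eps \<P> \<and> card \<P> = n)"

definition compressibility :: "('x \<Rightarrow> 'y \<Rightarrow> real) \<Rightarrow> 'x set \<Rightarrow> 'y set \<Rightarrow> real \<Rightarrow> real" where
  "compressibility W X Y eps =
     (real (card X) - real (rc_blocks W X Y eps)) / (real (card X) - 1)"

section \<open>The erasure channel; the erasure symbol alpha is None, symbol j is Some j\<close>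

definition erasure :: "real \<Rightarrow> nat \<Rightarrow> nat option \<Rightarrow> real" where
  "erasure \<eta> x y = (1 - \<eta>) * (if y = Some x then 1 else 0) + \<eta> * (if y = None then 1 else 0)"

definition erasure_k :: "real \<Rightarrow> nat list \<Rightarrow> nat option list \<Rightarrow> real" where
  "erasure_k \<eta> xs ys =
     (if length ys = length xs then (\<Prod>i<length xs. erasure \<eta> (xs ! i) (ys ! i)) else 0)"

definition inputs_k :: "nat \<Rightarrow> nat \<Rightarrow> nat list set" where
  "inputs_k r k = {xs. length xs = k \<and> set xs \<subseteq> {1..r}}"

definition outputs_k :: "nat \<Rightarrow> nat \<Rightarrow> nat option list set" where
  "outputs_k r k = {ys. length ys = k \<and> set ys \<subseteq> Some ` {1..r} \<union> {None}}"

definition hamming :: "'a list \<Rightarrow> 'a list \<Rightarrow> nat" where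
  "hamming xs ys = card {i. i < length xs \<and> xs ! i \<noteq> ys ! i}"

end

theory Submission imports Defs begin

lemma outputs_Suc: "outputs_k r (Suc k) = (\<lambda>(y,ys). y#ys) ` ((Some ` {1..r} \<union> {None}) \<times> outputs_k r k)"
proof
  show "outputs_k r (Suc k) \<subseteq> (\<lambda>(y,ys). y#ys) ` ((Some ` {1..r} \<union> {None}) \<times> outputs_k r k)"
  proof
    fix zs assume "zs \<in> outputs_k r (Suc k)"
    then obtain y ys where "zs = y # ys" "length ys = k" "y \<in> Some ` {1..r} \<union> {None}" "set ys \<subseteq> Some ` {1..r} \<union> {None}"
      unfolding outputs_k_def by (auto simp: length_Suc_conv)
    then show "zs \<in> (\<lambda>(y,ys). y#ys) ` ((Some ` {1..r} \<union> {None}) \<times> outputs_k r k)"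
      unfolding outputs_k_def by force
  qed
  show "(\<lambda>(y,ys). y#ys) ` ((Some ` {1..r} \<union> {None}) \<times> outputs_k r k) \<subseteq> outputs_k r (Suc k)"
    unfolding outputs_k_def by auto
qed

lemma outputs_0: "outputs_k r 0 = {[]}"
  unfolding outputs_k_def by auto

lemma erasure_k_Cons: "erasure_k \<eta> (a#xs) (y#ys) = erasure \<eta> a y * erasure_k \<eta> xs ys"
  unfolding erasure_k_def by (simp del: prod.lessThan_Suc add: prod.lessThan_Suc_shift)

lemma erasure_nonneg: "0 \<le> \<eta> \<Longrightarrow> \<eta> \<le> 1 \<Longrightarrow> 0 \<le> erasure \<eta> a y"
  unfolding erasure_def by auto

lemma erasure_k_nonneg: "0 \<le> \<eta> \<Longrightarrow> \<eta> \<le> 1 \<Longrightarrow> 0 \<le> erasure_k \<eta> xs ys"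
  unfolding erasure_k_def by (auto intro!: prod_nonneg erasure_nonneg)

lemma single_sum:
  assumes "0 \<le> \<eta>" "\<eta> \<le> 1" "a \<in> {1..r}" "b \<in> {1..r}"
  shows "(\<Sum>y\<in>Some ` {1..r} \<union> {None}. sqrt (erasure \<eta> a y * erasure \<eta> b y)) = (if a = b then 1 else \<eta>)"
proof -
  have "(\<Sum>y\<in>Some ` {1..r} \<union> {None}. sqrt (erasure \<eta> a y * erasure \<eta> b y))
      = (\<Sum>y\<in>Some ` {1..r}. sqrt (erasure \<eta> a y * erasure \<eta> b y)) + sqrt (erasure \<eta> a None * erasure \<eta> b None)"
    by (subst sum.union_disjoint) auto
  also have "(\<Sum>y\<in>Some ` {1..r}. sqrt (erasure \<eta> a y * erasure \<eta> b y)) = (\<Sum>j\<in>{1..r}. sqrt (erasure \<eta> a (Some j) * erasure \<eta> b (Some j)))"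
    by (subst sum.reindex) (auto simp: inj_on_def)
  also have "\<dots> = (\<Sum>j\<in>{1..r}. if j = a \<and> a = b then 1 - \<eta> else 0)"
    using assms by (intro sum.cong) (auto simp: erasure_def real_sqrt_mult[symmetric])
  also have "\<dots> = (if a = b then 1 - \<eta> else 0)"
    using assms by (auto simp: sum.delta')
  finally show ?thesis using assms by (auto simp: erasure_def)
qed

lemma hamming_Cons: "length xs = length xs' \<Longrightarrow>
  hamming (a#xs) (b#xs') = (if a = b then 0 else 1) + hamming xs xs'"
proof -
  assume l: "length xs = length xs'"
  have "{i. i < length (a#xs) \<and> (a#xs) ! i \<noteq> (b#xs') ! i} =
        (if a = b then {} else {0}) \<union> Suc ` {i. i < length xs \<and> xs ! i \<noteq> xs' ! i}" (is "?L = ?R")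
  proof (intro set_eqI iffI)
    fix i assume "i \<in> ?L" then show "i \<in> ?R" by (cases i) auto
  next
    fix i assume "i \<in> ?R" then show "i \<in> ?L" by (cases i) (auto split: if_splits)
  qed
  moreover have "finite {i. i < length xs \<and> xs ! i \<noteq> xs' ! i}" by auto
  ultimately show ?thesis unfolding hamming_def
    by (auto simp: card_image card_insert_if)
qed

lemma fid_sum:
  assumes "0 \<le> \<eta>" "\<eta> \<le> 1"
  shows "length xs' = length xs \<Longrightarrow> set xs \<subseteq> {1..r} \<Longrightarrow> set xs' \<subseteq> {1..r} \<Longrightarrow>
   (\<Sum>ys\<in>outputs_k r (length xs). sqrt (erasure_k \<eta> xs ys * erasure_k \<eta> xs' ys)) = \<eta> ^ hamming xs xs'"
proof (induction xs arbitrary: xs')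
  case Nil
  then show ?case by (simp add: outputs_0 erasure_k_def hamming_def)
next
  case (Cons a xs)
  then obtain b zs where xs': "xs' = b # zs" and lz: "length zs = length xs"
    by (cases xs') auto
  let ?Y = "Some ` {1..r} \<union> {None}"
  have "(\<Sum>ys\<in>outputs_k r (length (a#xs)). sqrt (erasure_k \<eta> (a#xs) ys * erasure_k \<eta> xs' ys))
    = (\<Sum>p\<in>?Y \<times> outputs_k r (length xs). sqrt (erasure_k \<eta> (a#xs) (fst p # snd p) * erasure_k \<eta> xs' (fst p # snd p)))"
    by (simp add: outputs_Suc, subst sum.reindex) (auto simp: inj_on_def case_prod_beta)
  also have "\<dots> = (\<Sum>p\<in>?Y \<times> outputs_k r (length xs). sqrt (erasure \<eta> a (fst p) * erasure \<eta> b (fst p)) * sqrt (erasure_k \<eta> xs (snd p) * erasure_k \<eta> zs (snd p)))"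
    by (intro sum.cong refl) (simp add: xs' erasure_k_Cons real_sqrt_mult[symmetric] mult_ac)
  also have "\<dots> = (\<Sum>y\<in>?Y. sqrt (erasure \<eta> a y * erasure \<eta> b y)) * (\<Sum>ys\<in>outputs_k r (length xs). sqrt (erasure_k \<eta> xs ys * erasure_k \<eta> zs ys))"
    by (subst sum_product, subst sum.cartesian_product, simp add: case_prod_beta)
  also have "\<dots> = (if a = b then 1 else \<eta>) * \<eta> ^ hamming xs zs"
  proof -
    have IH: "(\<Sum>ys\<in>outputs_k r (length xs). sqrt (erasure_k \<eta> xs ys * erasure_k \<eta> zs ys)) = \<eta> ^ hamming xs zs"
      using Cons xs' lz by auto
    have S: "(\<Sum>y\<in>?Y. sqrt (erasure \<eta> a y * erasure \<eta> b y)) = (if a = b then 1 else \<eta>)"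
      by (rule single_sum) (use Cons assms xs' in auto)
    show ?thesis by (simp only: IH S)
  qed
  also have "\<dots> = \<eta> ^ hamming (a#xs) xs'"
    using xs' lz by (simp add: hamming_Cons)
  finally show ?case .
qed


lemma fidelity_erasure:
  assumes "0 \<le> \<eta>" "\<eta> \<le> 1" "x \<in> inputs_k r k" "x' \<in> inputs_k r k"
  shows "fidelity (outputs_k r k) (erasure_k \<eta> x) (erasure_k \<eta> x') = \<eta> ^ (2 * hamming x x')"
proof -
  have "length x = k" "length x' = k" "set x \<subseteq> {1..r}" "set x' \<subseteq> {1..r}"
    using assms unfolding inputs_k_def by auto
  then show ?thesis unfolding fidelity_def
    using fid_sum[OF assms(1,2), of x' x r] by (simp add: power_mult[symmetric] mult.commute)
qed

lemma card_inputs: "card (inputs_k r k) = r ^ k"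
proof -
  have "inputs_k r k = {xs. set xs \<subseteq> {1..r} \<and> length xs = k}" unfolding inputs_k_def by auto
  then show ?thesis by (simp add: card_lists_length_eq)
qed

lemma finite_inputs: "finite (inputs_k r k)"
proof -
  have "inputs_k r k = {xs. set xs \<subseteq> {1..r} \<and> length xs = k}" unfolding inputs_k_def by auto
  then show ?thesis by (simp add: finite_lists_length_eq)
qed

lemma part_exists:
  assumes "s \<le> k" "r \<ge> 1"
  shows "\<exists>\<P>. partition_on (inputs_k r k) \<P> \<and> card \<P> = r ^ (k - s) \<and>
            (\<forall>B\<in>\<P>. \<forall>x\<in>B. \<forall>x'\<in>B. hamming x x' \<le> s)"
proof -
  define blk where "blk v = {xs \<in> inputs_k r k. drop s xs = v}" for v
  define P where "P = blk ` inputs_k r (k - s)"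
  have mem: "replicate s 1 @ v \<in> blk v" if "v \<in> inputs_k r (k - s)" for v
    using that assms unfolding blk_def inputs_k_def by auto
  have inj: "inj_on blk (inputs_k r (k - s))"
  proof (rule inj_onI)
    fix v w assume "v \<in> inputs_k r (k - s)" "w \<in> inputs_k r (k - s)" "blk v = blk w"
    then have "replicate s 1 @ v \<in> blk w" using mem by auto
    then show "v = w" unfolding blk_def by auto
  qed
  have part: "partition_on (inputs_k r k) P"
    unfolding partition_on_def
  proof (intro conjI)
    show "\<Union> P = inputs_k r k"
    proof
      show "\<Union> P \<subseteq> inputs_k r k" unfolding P_def blk_def by auto
      show "inputs_k r k \<subseteq> \<Union> P"
      proof
        fix x assume x: "x \<in> inputs_k r k"
        then have "drop s x \<in> inputs_k r (k - s)" unfolding inputs_k_def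
          by (auto dest: in_set_dropD)
        moreover have "x \<in> blk (drop s x)" using x unfolding blk_def by auto
        ultimately show "x \<in> \<Union> P" unfolding P_def by auto
      qed
    qed
    show "disjoint P" unfolding P_def disjoint_def blk_def by auto
    show "{} \<notin> P" unfolding P_def using mem by blast
  qed
  have card: "card P = r ^ (k - s)"
    unfolding P_def using card_image[OF inj] card_inputs by simp
  have ham: "hamming x x' \<le> s" if "B \<in> P" "x \<in> B" "x' \<in> B" for B x x'
  proof -
    obtain v where B: "B = blk v" using \<open>B \<in> P\<close> unfolding P_def by auto
    have lx: "length x = k" "length x' = k" "drop s x = drop s x'"
      using that B unfolding blk_def inputs_k_def by auto
    have "{i. i < length x \<and> x ! i \<noteq> x' ! i} \<subseteq> {..<s}"
    proof
      fix i assume i: "i \<in> {i. i < length x \<and> x ! i \<noteq> x' ! i}"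
      show "i \<in> {..<s}"
      proof (rule ccontr)
        assume "i \<notin> {..<s}"
        then have si: "s \<le> i" by auto
        have "drop s x ! (i - s) = drop s x' ! (i - s)" using lx(3) by simp
        moreover have "drop s x ! (i - s) = x ! i" "drop s x' ! (i - s) = x' ! i"
          using si i lx(1,2) by (auto simp: nth_drop)
        ultimately show False using i by auto
      qed
    qed
    then show ?thesis unfolding hamming_def by (metis card_lessThan card_mono finite_lessThan)
  qed
  show ?thesis using part card ham by blast
qed


theorem mainTheorem5:
  fixes r :: nat and \<eta> \<epsilon> :: real and s :: nat
  assumes "r \<ge> 2" and "0 < \<eta>" and "\<eta> < 1" and "0 < \<epsilon>" and "\<epsilon> < 1"
    and s_def: "s = nat \<lfloor>ln (1 - \<epsilon>) / (2 * ln \<eta>)\<rfloor>"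
  shows "(\<forall>k\<ge>s. \<exists>\<P>. partition_on (inputs_k r k) \<P> \<and> card \<P> = r ^ (k - s) \<and>
            (\<forall>B\<in>\<P>. \<forall>x\<in>B. \<forall>x'\<in>B. hamming x x' \<le> s))
       \<and> (\<forall>k\<ge>s. \<forall>\<P>. reverse_compression (erasure_k \<eta>) (inputs_k r k) (outputs_k r k) \<epsilon> \<P>
                 \<longrightarrow> card \<P> \<le> r ^ (k - s))
       \<and> liminf (\<lambda>k. ereal (compressibility (erasure_k \<eta>) (inputs_k r k) (outputs_k r k) \<epsilon>))
           \<ge> ereal (1 - 1 / real r ^ s)"
proof -
  define L where "L = ln (1 - \<epsilon>) / (2 * ln \<eta>)"
  have lne: "ln \<eta> < 0" using assms by simp
  have lnep: "ln (1 - \<epsilon>) < 0" using assms by simp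
  have Lpos: "L > 0" unfolding L_def using lne lnep by (simp add: divide_neg_neg)
  have sL: "real s \<le> L" unfolding s_def L_def[symmetric] using Lpos by linarith
  have "2 * real s * ln \<eta> \<ge> 2 * L * ln \<eta>" using sL lne by (simp add: mult_right_mono_neg)
  also have "2 * L * ln \<eta> = ln (1 - \<epsilon>)" unfolding L_def using lne by simp
  finally have lnineq: "ln (1 - \<epsilon>) \<le> ln (\<eta> ^ (2 * s))"
    using assms by (simp add: ln_realpow)
  have key: "1 - \<epsilon> \<le> \<eta> ^ (2 * s)"
    using lnineq assms by (subst (asm) ln_le_cancel_iff) auto
  have P1: "\<forall>k\<ge>s. \<exists>\<P>. partition_on (inputs_k r k) \<P> \<and> card \<P> = r ^ (k - s) \<and>
            (\<forall>B\<in>\<P>. \<forall>x\<in>B. \<forall>x'\<in>B. hamming x x' \<le> s)"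
  proof (intro allI impI)
    fix k assume "s \<le> k"
    then show "\<exists>\<P>. partition_on (inputs_k r k) \<P> \<and> card \<P> = r ^ (k - s) \<and>
            (\<forall>B\<in>\<P>. \<forall>x\<in>B. \<forall>x'\<in>B. hamming x x' \<le> s)"
      by (rule part_exists) (use assms in auto)
  qed
  have adm: "\<exists>\<P>. eps_admissible (erasure_k \<eta>) (inputs_k r k) (outputs_k r k) \<epsilon> \<P> \<and> card \<P> = r ^ (k - s)"
    if ks: "k \<ge> s" for k
  proof -
    obtain P where P: "partition_on (inputs_k r k) P" "card P = r ^ (k - s)"
      "\<forall>B\<in>P. \<forall>x\<in>B. \<forall>x'\<in>B. hamming x x' \<le> s"
      using P1 ks by meson
    have "fidelity (outputs_k r k) (erasure_k \<eta> x) (erasure_k \<eta> x') \<ge> 1 - \<epsilon>"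
      if "B \<in> P" "x \<in> B" "x' \<in> B" for B x x'
    proof -
      have xin: "x \<in> inputs_k r k" "x' \<in> inputs_k r k"
        using P(1) that unfolding partition_on_def by auto
      have "\<eta> ^ (2 * s) \<le> \<eta> ^ (2 * hamming x x')"
      proof (rule power_decreasing)
        have "hamming x x' \<le> s" using P(3) that by blast
        then show "2 * hamming x x' \<le> 2 * s" by simp
      qed (use assms in auto)
      moreover have "fidelity (outputs_k r k) (erasure_k \<eta> x) (erasure_k \<eta> x') = \<eta> ^ (2 * hamming x x')"
        by (rule fidelity_erasure[OF _ _ xin]) (use assms in auto)
      ultimately show ?thesis using key by linarith
    qed
    then have "eps_admissible (erasure_k \<eta>) (inputs_k r k) (outputs_k r k) \<epsilon> P"
      using P(1) unfolding eps_admissible_def by blast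
    then show ?thesis using P(2) by blast
  qed
  have P2: "\<forall>k\<ge>s. \<forall>\<P>. reverse_compression (erasure_k \<eta>) (inputs_k r k) (outputs_k r k) \<epsilon> \<P>
                 \<longrightarrow> card \<P> \<le> r ^ (k - s)"
  proof (intro allI impI)
    fix k P assume ks: "s \<le> k" and rcP: "reverse_compression (erasure_k \<eta>) (inputs_k r k) (outputs_k r k) \<epsilon> P"
    obtain Q where "eps_admissible (erasure_k \<eta>) (inputs_k r k) (outputs_k r k) \<epsilon> Q" "card Q = r ^ (k - s)"
      using adm[OF ks] by blast
    then show "card P \<le> r ^ (k - s)" using rcP unfolding reverse_compression_def by auto
  qed
  have rc: "rc_blocks (erasure_k \<eta>) (inputs_k r k) (outputs_k r k) \<epsilon> \<le> r ^ (k - s)" if "k \<ge> s" for k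
    unfolding rc_blocks_def using adm[OF that] by (intro Least_le) blast
  have comp: "1 - 1 / real r ^ s \<le> compressibility (erasure_k \<eta>) (inputs_k r k) (outputs_k r k) \<epsilon>"
    if "k \<ge> s" "k \<ge> 1" for k
  proof -
    define R where "R = real (rc_blocks (erasure_k \<eta>) (inputs_k r k) (outputs_k r k) \<epsilon>)"
    define M where "M = real r ^ (k - s)"
    define N where "N = real r ^ k"
    have rpos: "real r \<ge> 2" using assms by simp
    have NM: "N = M * real r ^ s"
    proof -
      have "k = (k - s) + s" using that by simp
      then have "real r ^ k = real r ^ ((k - s) + s)" by metis
      then show ?thesis unfolding N_def M_def by (simp only: power_add)
    qed
    have Mpos: "M > 0" unfolding M_def using rpos by simp
    have rs: "real r ^ s \<ge> 1" using rpos by (simp add: one_le_power)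
    have RM: "R \<le> M" unfolding R_def M_def using rc[OF that(1)]
      by (simp flip: of_nat_power)
    have N2: "N \<ge> 2"
    proof -
      have "real r ^ 1 \<le> real r ^ k" using rpos that by (intro power_increasing) auto
      then have "real r \<le> real r ^ k" by simp
      then show ?thesis unfolding N_def using rpos by linarith
    qed
    have MN: "M \<le> N" using NM Mpos rs by (simp add: mult_le_cancel_left1)
    have "1 - 1 / real r ^ s = (N - M) / N" 
    proof -
      have t: "real r ^ s > 0" using rs by linarith
      have "(M * real r ^ s - M) / (M * real r ^ s) = (real r ^ s - 1) / real r ^ s"
        using Mpos t by (simp add: field_simps)
      also have "\<dots> = 1 - 1 / real r ^ s" using t by (simp add: diff_divide_distrib)
      finally show ?thesis unfolding NM by simp
    qed
    also have "\<dots> \<le> (N - M) / (N - 1)" using MN N2 by (intro divide_left_mono) auto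
    also have "\<dots> \<le> (N - R) / (N - 1)" using RM N2 by (intro divide_right_mono) auto
    also have "\<dots> = compressibility (erasure_k \<eta>) (inputs_k r k) (outputs_k r k) \<epsilon>"
      unfolding compressibility_def R_def N_def card_inputs by simp
    finally show ?thesis .
  qed
  have P3: "liminf (\<lambda>k. ereal (compressibility (erasure_k \<eta>) (inputs_k r k) (outputs_k r k) \<epsilon>))
           \<ge> ereal (1 - 1 / real r ^ s)"
  proof (rule Liminf_bounded)
    show "\<forall>\<^sub>F k in sequentially. ereal (1 - 1 / real r ^ s) \<le> ereal (compressibility (erasure_k \<eta>) (inputs_k r k) (outputs_k r k) \<epsilon>)"
    proof (rule eventually_mono[OF eventually_ge_at_top[of "max s 1"]])
      fix k :: nat assume "max s 1 \<le> k"
      then show "ereal (1 - 1 / real r ^ s) \<le> ereal (compressibility (erasure_k \<eta>) (inputs_k r k) (outputs_k r k) \<epsilon>)"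
        using comp[of k] by simp
    qed
  qed
  show ?thesis by (rule conjI[OF P1 conjI[OF P2 P3]])
qed

end
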